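(* Let $\Gamma$ be a well-ordered set and let $f:[\Gamma]^2\to\{0,1\}$ be a partition of the first kind. Let $P_f:\ell_1(\Gamma)\to\mathbb{C}$ be the quadratic functional $P_f(x)=\sum_{\{i,j\}\in f^{-1}(1)}x_ix_j$. If $Y$ is a linear subspace of $\ell_1(\Gamma)$ with $Y\subset P_f^{-1}(0)$, then $Y$ is separable.
   Context: $\ell_1(\Gamma)$ is the complex Banach space of absolutely summable families $x=(x_\gamma)_{\gamma\in\Gamma}$. $[\Gamma]^2$ denotes the set of two-element subsets of $\Gamma$, and we write $f(\alpha,\beta)$ for $f(\{\alpha,\beta\})$. For a finite set $a\subset\Gamma$ of cardinality $n$ and $k<n$, $a(k)$ denotes the $(k+1)$-th element of $a$ in the well order of $\Gamma$, so $a=\{a(0),\dots,a(n-1)\}$. A function $f:[\Gamma]^2\to\{0,1\}$ is a partition of the first kind if for every $n<\omega$, every uncountable family $A$ of pairwise disjoint subsets of $\Gamma$ each of cardinality $n$, and every $k<n$, there exist $a,b,a',b'\in A$ with $a\neq b$, $a'\neq b'$, such that $f(a(k),b(k))=1$, $f(a'(k),b'(k))=0$, and $f(a(i),b(j))=f(a'(i),b'(j))$ for all $(i,j)\in n\times n$ with $(i,j)\neq(k,k)$. *)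

theory Defs
  imports "HOL-Analysis.Analysis"
begin

text \<open>The well-ordered set Gamma is modelled as a type of class wellorder.
  Elements of ell_1(Gamma) are complex-valued families that are absolutely summable.\<close>

definition ell1 :: "('a \<Rightarrow> complex) set" where
  "ell1 = {x. (\<lambda>g. norm (x g)) summable_on UNIV}"

definition ell1_norm :: "('a \<Rightarrow> complex) \<Rightarrow> real" where
  "ell1_norm x = (\<Sum>\<^sub>\<infinity>g. norm (x g))"

text \<open>k-th element (0-based) of a finite set in the well order.\<close>
definition nth_elem :: "'a::linorder set \<Rightarrow> nat \<Rightarrow> 'a" where
  "nth_elem a k = sorted_list_of_set a ! k"

text \<open>f is a colouring of two-element sets; f(alpha,beta) = f {alpha,beta}.\<close>
definition partition_first_kind :: "('a::wellorder set \<Rightarrow> nat) \<Rightarrow> bool" where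
  "partition_first_kind f \<longleftrightarrow>
     (\<forall>n::nat. \<forall>A::'a set set.
        (uncountable A \<and> pairwise disjnt A \<and> (\<forall>a\<in>A. finite a \<and> card a = n)) \<longrightarrow>
        (\<forall>k<n. \<exists>a\<in>A. \<exists>b\<in>A. \<exists>a'\<in>A. \<exists>b'\<in>A. a \<noteq> b \<and> a' \<noteq> b' \<and>
            f {nth_elem a k, nth_elem b k} = 1 \<and>
            f {nth_elem a' k, nth_elem b' k} = 0 \<and>
            (\<forall>i<n. \<forall>j<n. (i, j) \<noteq> (k, k) \<longrightarrow>
               f {nth_elem a i, nth_elem b j} = f {nth_elem a' i, nth_elem b' j})))"

definition P_f :: "('a::wellorder set \<Rightarrow> nat) \<Rightarrow> ('a \<Rightarrow> complex) \<Rightarrow> complex" where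
  "P_f f x = (\<Sum>\<^sub>\<infinity>(i, j) \<in> {(i, j). i < j \<and> f {i, j} = 1}. x i * x j)"

definition linear_subspace_ell1 :: "('a \<Rightarrow> complex) set \<Rightarrow> bool" where
  "linear_subspace_ell1 Y \<longleftrightarrow> Y \<subseteq> ell1 \<and> (\<lambda>_. 0) \<in> Y \<and>
     (\<forall>x\<in>Y. \<forall>y\<in>Y. (\<lambda>g. x g + y g) \<in> Y) \<and>
     (\<forall>c::complex. \<forall>x\<in>Y. (\<lambda>g. c * x g) \<in> Y)"

definition separable_ell1 :: "('a \<Rightarrow> complex) set \<Rightarrow> bool" where
  "separable_ell1 Y \<longleftrightarrow> (\<exists>D. countable D \<and> D \<subseteq> Y \<and>
     (\<forall>y\<in>Y. \<forall>e>0. \<exists>d\<in>D. ell1_norm (\<lambda>g. y g - d g) < e))"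

end

theory Submission
  imports Defs
begin

lemma ell1_iff: "x \<in> ell1 \<longleftrightarrow> (\<lambda>g. norm (x g)) summable_on UNIV"
  by (simp add: ell1_def)

lemma ell1_abs: "x \<in> ell1 \<Longrightarrow> (\<lambda>g. norm (x g)) summable_on A"
  unfolding ell1_def by (auto intro: summable_on_subset_banach)

lemma ell1_summable: "x \<in> ell1 \<Longrightarrow> x summable_on A"
  using ell1_abs[of x A] abs_summable_summable[of x A] by simp

lemma ell1_nonneg: "0 \<le> ell1_norm x"
  unfolding ell1_norm_def by (simp add: infsum_nonneg)

lemma ell1_comp: "x \<in> ell1 \<Longrightarrow> (\<And>g. norm (z g) \<le> norm (x g)) \<Longrightarrow> z \<in> ell1"
  unfolding ell1_iff by (rule summable_on_comparison_test) auto

lemma ell1_add: "x \<in> ell1 \<Longrightarrow> z \<in> ell1 \<Longrightarrow> (\<lambda>g. x g + z g) \<in> ell1"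
proof -
  assume a: "x \<in> ell1" "z \<in> ell1"
  have "(\<lambda>g. norm (x g) + norm (z g)) summable_on UNIV"
    using a unfolding ell1_iff by (rule summable_on_add)
  then show ?thesis unfolding ell1_iff
    by (rule summable_on_comparison_test) (auto intro: norm_triangle_ineq)
qed

lemma ell1_scale: "x \<in> ell1 \<Longrightarrow> (\<lambda>g. c * x g) \<in> ell1"
proof -
  assume a: "x \<in> ell1"
  have "(\<lambda>g. norm c * norm (x g)) summable_on UNIV"
    using a unfolding ell1_iff by (rule summable_on_cmult_right)
  then show ?thesis unfolding ell1_iff by (simp add: norm_mult)
qed

lemma ell1_diff: "x \<in> ell1 \<Longrightarrow> z \<in> ell1 \<Longrightarrow> (\<lambda>g. x g - z g) \<in> ell1"
  using ell1_add[of x "\<lambda>g. (-1) * z g"] ell1_scale[of z "-1"] by simp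

lemma ell1_restrict: "x \<in> ell1 \<Longrightarrow> (\<lambda>g. if g \<in> F then x g else 0) \<in> ell1"
  by (rule ell1_comp) auto

lemma ell1_restrict': "x \<in> ell1 \<Longrightarrow> (\<lambda>g. if g \<in> F then 0 else x g) \<in> ell1"
  by (rule ell1_comp) auto

lemma ell1_finite: "finite F \<Longrightarrow> (\<And>g. g \<notin> F \<Longrightarrow> x g = 0) \<Longrightarrow> x \<in> ell1"
  unfolding ell1_iff
  by (rule finite_nonzero_values_imp_summable_on) (auto intro: finite_subset)

lemma ell1_point: "x \<in> ell1 \<Longrightarrow> norm (x p) \<le> ell1_norm x"
  unfolding ell1_norm_def ell1_def
  using finite_sum_le_infsum[of "\<lambda>g. norm (x g)" UNIV "{p}"] by auto

lemma ell1_split: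
  assumes "x \<in> ell1" "finite F"
  shows "ell1_norm x = (\<Sum>g\<in>F. norm (x g)) + ell1_norm (\<lambda>g. if g \<in> F then 0 else x g)"
proof -
  have s: "(\<lambda>g. norm (x g)) summable_on A" for A
    using assms(1) ell1_abs by blast
  have "ell1_norm x = (\<Sum>\<^sub>\<infinity>g\<in>F \<union> (UNIV - F). norm (x g))"
    unfolding ell1_norm_def by (simp add: Un_Diff_cancel)
  also have "\<dots> = (\<Sum>\<^sub>\<infinity>g\<in>F. norm (x g)) + (\<Sum>\<^sub>\<infinity>g\<in>UNIV - F. norm (x g))"
    by (rule infsum_Un_disjoint) (auto intro: s)
  also have "(\<Sum>\<^sub>\<infinity>g\<in>UNIV - F. norm (x g)) = ell1_norm (\<lambda>g. if g \<in> F then 0 else x g)"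
    unfolding ell1_norm_def by (rule infsum_cong_neutral) auto
  finally show ?thesis using assms(2) by simp
qed

lemma ell1_tail:
  assumes "x \<in> ell1" "d > 0"
  shows "\<exists>F. finite F \<and> ell1_norm (\<lambda>g. if g \<in> F then 0 else x g) < d"
proof -
  have "(\<lambda>g. norm (x g)) summable_on UNIV" using assms ell1_def by auto
  from infsum_finite_approximation[OF this, of "d/2"] assms(2)
  obtain F where F: "finite F" "dist (\<Sum>g\<in>F. norm (x g)) (ell1_norm x) \<le> d/2"
    unfolding ell1_norm_def by auto
  have "ell1_norm x = (\<Sum>g\<in>F. norm (x g)) + ell1_norm (\<lambda>g. if g \<in> F then 0 else x g)"
    by (rule ell1_split[OF assms(1) F(1)])
  with F(2) assms(2) have "ell1_norm (\<lambda>g. if g \<in> F then 0 else x g) < d"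
    by (simp add: dist_real_def)
  with F(1) show ?thesis by blast
qed

lemma ell1_norm_mono: "x \<in> ell1 \<Longrightarrow> (\<And>g. norm (z g) \<le> norm (x g)) \<Longrightarrow> ell1_norm z \<le> ell1_norm x"
  unfolding ell1_norm_def
  by (rule infsum_mono) (auto intro: ell1_comp simp: ell1_def[symmetric] ell1_iff[symmetric])

lemma ell1_tri:
  assumes "a \<in> ell1" "b \<in> ell1" "c \<in> ell1"
  shows "ell1_norm (\<lambda>g. a g - c g) \<le> ell1_norm (\<lambda>g. a g - b g) + ell1_norm (\<lambda>g. b g - c g)"
proof -
  have s1: "(\<lambda>g. norm (a g - b g)) summable_on UNIV" and s2: "(\<lambda>g. norm (b g - c g)) summable_on UNIV"
    using ell1_diff assms unfolding ell1_def by blast+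
  have "ell1_norm (\<lambda>g. a g - c g) \<le> (\<Sum>\<^sub>\<infinity>g. norm (a g - b g) + norm (b g - c g))"
    unfolding ell1_norm_def
    by (rule infsum_mono) (use ell1_diff assms s1 s2 in \<open>auto simp: ell1_iff intro: summable_on_add norm_diff_triangle_le\<close>)
  also have "\<dots> = ell1_norm (\<lambda>g. a g - b g) + ell1_norm (\<lambda>g. b g - c g)"
    unfolding ell1_norm_def by (rule infsum_add[OF s1 s2])
  finally show ?thesis .
qed

lemma ell1_scale_norm: "x \<in> ell1 \<Longrightarrow> ell1_norm (\<lambda>g. c * x g) = norm c * ell1_norm x"
  unfolding ell1_norm_def by (simp add: norm_mult infsum_cmult_right')


definition S2 :: "('a::wellorder set \<Rightarrow> nat) \<Rightarrow> ('a \<times> 'a) set" where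
  "S2 f = {(i,j). i \<noteq> j \<and> f {i,j} = 1}"

definition S1 :: "('a::wellorder set \<Rightarrow> nat) \<Rightarrow> ('a \<times> 'a) set" where
  "S1 f = {(i,j). i < j \<and> f {i,j} = 1}"

definition Bf :: "('a::wellorder set \<Rightarrow> nat) \<Rightarrow> ('a \<Rightarrow> complex) \<Rightarrow> ('a \<Rightarrow> complex) \<Rightarrow> complex" where
  "Bf f x z = (\<Sum>\<^sub>\<infinity>(i,j)\<in>S2 f. x i * z j)"

definition gc :: "('a::wellorder set \<Rightarrow> nat) \<Rightarrow> 'a \<Rightarrow> 'a \<Rightarrow> complex" where
  "gc f i j = (if i \<noteq> j \<and> f {i,j} = 1 then 1 else 0)"

lemma infsum_diff':
  fixes f g :: "'b \<Rightarrow> complex"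
  assumes "f summable_on A" "g summable_on A"
  shows "infsum (\<lambda>x. f x - g x) A = infsum f A - infsum g A"
proof -
  have "(\<lambda>x. - g x) summable_on A" using assms(2) summable_on_uminus by blast
  then have "infsum (\<lambda>x. f x + - g x) A = infsum f A + infsum (\<lambda>x. - g x) A"
    using infsum_add[OF assms(1)] by blast
  then show ?thesis by (simp add: infsum_uminus)
qed

lemma prod_has_sum:
  assumes "x \<in> ell1" "z \<in> ell1"
  shows "((\<lambda>(i,j). norm (x i) * norm (z j)) has_sum (ell1_norm x * ell1_norm z)) UNIV"
proof -
  have hz: "((\<lambda>j. norm (z j)) has_sum ell1_norm z) UNIV"
    using assms(2) unfolding ell1_iff ell1_norm_def by simp
  have hx: "((\<lambda>i. norm (x i)) has_sum ell1_norm x) UNIV"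
    using assms(1) unfolding ell1_iff ell1_norm_def by simp
  have h1: "((\<lambda>j. (\<lambda>(i,j). norm (x i) * norm (z j)) (i, j)) has_sum norm (x i) * ell1_norm z) UNIV" for i
    using has_sum_cmult_right[OF hz, of "norm (x i)"] by simp
  have h2: "((\<lambda>i. norm (x i) * ell1_norm z) has_sum ell1_norm x * ell1_norm z) UNIV"
    using has_sum_cmult_left[OF hx, of "ell1_norm z"] by simp
  have h3: "(\<lambda>(i,j). norm (x i) * norm (z j)) summable_on Sigma UNIV (\<lambda>_. UNIV)"
    by (rule summable_on_SigmaI[OF h1]) (use h2 in \<open>auto simp: summable_on_def\<close>)
  have "((\<lambda>(i,j). norm (x i) * norm (z j)) has_sum (ell1_norm x * ell1_norm z)) (Sigma UNIV (\<lambda>_. UNIV))"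
    by (rule has_sum_SigmaI[OF h1 h2 h3])
  then show ?thesis by simp
qed

lemma prod_abs_summable:
  assumes "x \<in> ell1" "z \<in> ell1"
  shows "(\<lambda>p. norm ((\<lambda>(i,j). x i * z j) p)) summable_on A"
proof -
  have "(\<lambda>(i,j). norm (x i) * norm (z j)) summable_on UNIV"
    using prod_has_sum[OF assms] summable_on_def by blast
  then have "(\<lambda>(i,j). norm (x i) * norm (z j)) summable_on A"
    by (rule summable_on_subset_banach) auto
  moreover have "(\<lambda>p. norm ((\<lambda>(i,j). x i * z j) p)) = (\<lambda>(i,j). norm (x i) * norm (z j))"
    by (auto simp: norm_mult)
  ultimately show ?thesis by simp
qed

lemma prod_summable:
  assumes "x \<in> ell1" "z \<in> ell1"
  shows "(\<lambda>(i,j). x i * z j) summable_on A"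
  using prod_abs_summable[OF assms, of A] abs_summable_summable by blast

lemma Bf_bound:
  assumes "x \<in> ell1" "z \<in> ell1"
  shows "norm (Bf f x z) \<le> ell1_norm x * ell1_norm z"
proof -
  have "norm (Bf f x z) \<le> (\<Sum>\<^sub>\<infinity>p\<in>S2 f. norm ((\<lambda>(i,j). x i * z j) p))"
    unfolding Bf_def by (rule norm_infsum_bound) (rule prod_abs_summable[OF assms])
  also have "\<dots> \<le> (\<Sum>\<^sub>\<infinity>p\<in>UNIV. norm ((\<lambda>(i,j). x i * z j) p))"
    by (rule infsum_mono_neutral) (auto intro: prod_abs_summable[OF assms])
  also have "\<dots> = ell1_norm x * ell1_norm z"
  proof -
    have e: "(\<lambda>p. norm ((\<lambda>(i,j). x i * z j) p)) = (\<lambda>(i,j). norm (x i) * norm (z j))"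
      by (auto simp: norm_mult)
    show ?thesis unfolding e by (rule infsumI[OF prod_has_sum[OF assms]])
  qed
  finally show ?thesis .
qed

lemma Bf_diff_left:
  assumes "x \<in> ell1" "x' \<in> ell1" "z \<in> ell1"
  shows "Bf f (\<lambda>g. x g - x' g) z = Bf f x z - Bf f x' z"
proof -
  have "Bf f (\<lambda>g. x g - x' g) z = (\<Sum>\<^sub>\<infinity>p\<in>S2 f. (\<lambda>(i,j). x i * z j) p - (\<lambda>(i,j). x' i * z j) p)"
    unfolding Bf_def by (rule infsum_cong) (auto simp: algebra_simps)
  also have "\<dots> = Bf f x z - Bf f x' z"
    unfolding Bf_def by (rule infsum_diff') (auto intro: prod_summable assms)
  finally show ?thesis .
qed

lemma Bf_diff_right:
  assumes "x \<in> ell1" "z \<in> ell1" "z' \<in> ell1"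
  shows "Bf f x (\<lambda>g. z g - z' g) = Bf f x z - Bf f x z'"
proof -
  have "Bf f x (\<lambda>g. z g - z' g) = (\<Sum>\<^sub>\<infinity>p\<in>S2 f. (\<lambda>(i,j). x i * z j) p - (\<lambda>(i,j). x i * z' j) p)"
    unfolding Bf_def by (rule infsum_cong) (auto simp: algebra_simps)
  also have "\<dots> = Bf f x z - Bf f x z'"
    unfolding Bf_def by (rule infsum_diff') (auto intro: prod_summable assms)
  finally show ?thesis .
qed

lemma S2_split: "S2 f = S1 f \<union> prod.swap ` S1 f" "S1 f \<inter> prod.swap ` S1 f = {}"
  by (auto simp: S1_def S2_def insert_commute image_iff neq_iff)

lemma P_add:
  assumes "x \<in> ell1" "z \<in> ell1"
  shows "P_f f (\<lambda>g. x g + z g) = P_f f x + P_f f z + Bf f x z"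
proof -
  have "P_f f (\<lambda>g. x g + z g) = (\<Sum>\<^sub>\<infinity>p\<in>S1 f. ((\<lambda>(i,j). x i * x j) p + (\<lambda>(i,j). z i * z j) p)
      + ((\<lambda>(i,j). x i * z j) p + (\<lambda>(i,j). z i * x j) p))"
    unfolding P_f_def S1_def by (rule infsum_cong) (auto simp: algebra_simps)
  also have "\<dots> = (\<Sum>\<^sub>\<infinity>p\<in>S1 f. ((\<lambda>(i,j). x i * x j) p + (\<lambda>(i,j). z i * z j) p))
      + (\<Sum>\<^sub>\<infinity>p\<in>S1 f. ((\<lambda>(i,j). x i * z j) p + (\<lambda>(i,j). z i * x j) p))"
    by (rule infsum_add) (auto intro!: summable_on_add prod_summable assms)
  also have "(\<Sum>\<^sub>\<infinity>p\<in>S1 f. ((\<lambda>(i,j). x i * x j) p + (\<lambda>(i,j). z i * z j) p)) = P_f f x + P_f f z"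
    unfolding P_f_def S1_def by (rule infsum_add) (auto intro!: prod_summable assms)
  also have "(\<Sum>\<^sub>\<infinity>p\<in>S1 f. ((\<lambda>(i,j). x i * z j) p + (\<lambda>(i,j). z i * x j) p))
     = (\<Sum>\<^sub>\<infinity>p\<in>S1 f. (\<lambda>(i,j). x i * z j) p) + (\<Sum>\<^sub>\<infinity>p\<in>S1 f. (\<lambda>(i,j). z i * x j) p)"
    by (rule infsum_add) (auto intro!: prod_summable assms)
  also have "(\<Sum>\<^sub>\<infinity>p\<in>S1 f. (\<lambda>(i,j). z i * x j) p) = (\<Sum>\<^sub>\<infinity>p\<in>prod.swap ` S1 f. (\<lambda>(i,j). x i * z j) p)"
    by (subst infsum_reindex) (auto simp: o_def mult.commute)
  also have "(\<Sum>\<^sub>\<infinity>p\<in>S1 f. (\<lambda>(i,j). x i * z j) p) + (\<Sum>\<^sub>\<infinity>p\<in>prod.swap ` S1 f. (\<lambda>(i,j). x i * z j) p)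
      = Bf f x z"
    unfolding Bf_def S2_split(1)
    by (rule infsum_Un_disjoint[symmetric]) (auto intro!: prod_summable assms S2_split(2))
  finally show ?thesis by simp
qed

lemma Bf_finite:
  assumes "finite X" "finite Z" "\<And>g. g \<notin> X \<Longrightarrow> x g = 0" "\<And>g. g \<notin> Z \<Longrightarrow> z g = 0"
  shows "Bf f x z = (\<Sum>i\<in>X. \<Sum>j\<in>Z. gc f i j * x i * z j)"
proof -
  have ax: "x a \<noteq> 0 \<Longrightarrow> a \<in> X" for a using assms(3) by blast
  have az: "z a \<noteq> 0 \<Longrightarrow> a \<in> Z" for a using assms(4) by blast
  have "Bf f x z = (\<Sum>\<^sub>\<infinity>p\<in>X \<times> Z. (\<lambda>(i,j). gc f i j * x i * z j) p)"
    unfolding Bf_def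
    by (rule infsum_cong_neutral) (auto simp: S2_def gc_def ax az split: if_splits)
  also have "\<dots> = (\<Sum>p\<in>X \<times> Z. (\<lambda>(i,j). gc f i j * x i * z j) p)"
    using assms by simp
  also have "\<dots> = (\<Sum>i\<in>X. \<Sum>j\<in>Z. gc f i j * x i * z j)"
    by (simp add: sum.cartesian_product)
  finally show ?thesis .
qed


lemma unc_ne: "uncountable X \<Longrightarrow> X \<noteq> {}" by auto

lemma pigeon:
  assumes "uncountable P" "countable S" "\<And>p. p \<in> P \<Longrightarrow> h p \<in> S"
  shows "\<exists>v. uncountable {p\<in>P. h p = v}"
proof (rule ccontr)
  assume "\<not> ?thesis"
  then have c: "countable {p\<in>P. h p = v}" for v by blast
  have "P = (\<Union>v\<in>S. {p\<in>P. h p = v})" using assms(3) by blast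
  moreover have "countable (\<Union>v\<in>S. {p\<in>P. h p = v})"
    using assms(2) c by (intro countable_UN) auto
  ultimately show False using assms(1) by simp
qed

lemma disj_sub:
  assumes unc: "uncountable P" and fin: "\<forall>p\<in>P. finite (F p)"
    and cnt: "\<forall>x. countable {p\<in>P. x \<in> F p}"
  shows "\<exists>D\<subseteq>P. uncountable D \<and> (\<forall>p\<in>D. \<forall>q\<in>D. p \<noteq> q \<longrightarrow> F p \<inter> F q = {})"
proof -
  define \<A> where "\<A> = {D. D \<subseteq> P \<and> (\<forall>p\<in>D. \<forall>q\<in>D. p \<noteq> q \<longrightarrow> F p \<inter> F q = {})}"
  have AI: "D \<in> \<A>" if "D \<subseteq> P" "\<And>p q. p \<in> D \<Longrightarrow> q \<in> D \<Longrightarrow> p \<noteq> q \<Longrightarrow> F p \<inter> F q = {}" for D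
    using that unfolding \<A>_def by blast
  have AD1: "D \<subseteq> P" if "D \<in> \<A>" for D using that unfolding \<A>_def by blast
  have AD2: "F p \<inter> F q = {}" if "D \<in> \<A>" "p \<in> D" "q \<in> D" "p \<noteq> q" for D p q
    using that unfolding \<A>_def by blast
  have "\<forall>C\<in>chains \<A>. \<Union>C \<in> \<A>"
  proof
    fix C assume C: "C \<in> chains \<A>"
    then have sub: "C \<subseteq> \<A>" and ch: "\<forall>x\<in>C. \<forall>y\<in>C. x \<subseteq> y \<or> y \<subseteq> x"
      unfolding chains_def chain_subset_def by auto
    show "\<Union>C \<in> \<A>"
    proof (rule AI)
      show "\<Union>C \<subseteq> P" using sub AD1 by blast
    next
      fix p q assume p: "p \<in> \<Union>C" and q: "q \<in> \<Union>C" and pq: "p \<noteq> q"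
      then obtain D1 D2 where D: "D1 \<in> C" "D2 \<in> C" "p \<in> D1" "q \<in> D2" by blast
      from ch D(1,2) have "D1 \<subseteq> D2 \<or> D2 \<subseteq> D1" by blast
      then show "F p \<inter> F q = {}"
      proof
        assume "D1 \<subseteq> D2"
        then show ?thesis using AD2[of D2 p q] sub D pq by blast
      next
        assume "D2 \<subseteq> D1"
        then show ?thesis using AD2[of D1 p q] sub D pq by blast
      qed
    qed
  qed
  from Zorn_Lemma[OF this] obtain M where M: "M \<in> \<A>" and max: "\<forall>X\<in>\<A>. M \<subseteq> X \<longrightarrow> X = M"
    by blast
  have "uncountable M"
  proof
    assume cM: "countable M"
    define U where "U = (\<Union>p\<in>M. F p)"
    have "countable U" unfolding U_def
      using cM fin AD1[OF M] by (intro countable_UN) (auto intro: countable_finite)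
    then have cB: "countable (\<Union>x\<in>U. {p\<in>P. x \<in> F p})"
      using cnt by (intro countable_UN) auto
    have "uncountable (P - M - (\<Union>x\<in>U. {p\<in>P. x \<in> F p}))"
      by (intro uncountable_minus_countable cB cM unc)
    then have "P - M - (\<Union>x\<in>U. {p\<in>P. x \<in> F p}) \<noteq> {}" by (rule unc_ne)
    then obtain p where p: "p \<in> P" "p \<notin> M" "p \<notin> (\<Union>x\<in>U. {p\<in>P. x \<in> F p})"
      by blast
    have pU: "x \<notin> F p" if "x \<in> U" for x using p that by blast
    have "insert p M \<in> \<A>"
    proof (rule AI)
      show "insert p M \<subseteq> P" using p AD1[OF M] by blast
    next
      fix a b assume ab: "a \<in> insert p M" "b \<in> insert p M" "a \<noteq> b"
      show "F a \<inter> F b = {}"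
      proof (cases "a = p")
        case True
        then have "b \<in> M" using ab by auto
        then have "F b \<subseteq> U" unfolding U_def by blast
        then show ?thesis using pU True by blast
      next
        case False
        then have a: "a \<in> M" using ab by auto
        show ?thesis
        proof (cases "b = p")
          case True
          have "F a \<subseteq> U" unfolding U_def using a by blast
          then show ?thesis using pU True by blast
        next
          case False
          then show ?thesis using AD2[OF M a, of b] ab by auto
        qed
      qed
    qed
    then have "insert p M = M" using max by auto
    then show False using p(2) by auto
  qed
  moreover have "\<forall>p\<in>M. \<forall>q\<in>M. p \<noteq> q \<longrightarrow> F p \<inter> F q = {}"
    using AD2[OF M] by blast
  ultimately show ?thesis using AD1[OF M] by blast
qed

lemma ds_intro:
  assumes "P' \<subseteq> P" "uncountable P'" "\<forall>p\<in>P'. \<forall>q\<in>P'. p \<noteq> q \<longrightarrow> F p \<inter> F q = R"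
  shows "\<exists>P'\<subseteq>P. uncountable P' \<and> (\<exists>R. \<forall>p\<in>P'. \<forall>q\<in>P'. p \<noteq> q \<longrightarrow> F p \<inter> F q = R)"
  apply (rule exI[of _ P'])
  apply (intro conjI assms(1) assms(2))
  apply (rule exI[of _ R])
  by (rule assms(3))

lemma delta_system:
  fixes F :: "'b \<Rightarrow> 'c set"
  assumes "uncountable P" "\<forall>p\<in>P. finite (F p) \<and> card (F p) \<le> m"
  shows "\<exists>P'\<subseteq>P. uncountable P' \<and> (\<exists>R. \<forall>p\<in>P'. \<forall>q\<in>P'. p \<noteq> q \<longrightarrow> F p \<inter> F q = R)"
  using assms
proof (induction m arbitrary: P F)
  case 0
  then have e: "\<forall>p\<in>P. F p = {}" by auto
  have "\<forall>p\<in>P. \<forall>q\<in>P. p \<noteq> q \<longrightarrow> F p \<inter> F q = {}" using e by simp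
  then show ?case by (rule ds_intro[OF subset_refl 0(1)])
next
  case (Suc m)
  show ?case
  proof (cases "\<exists>x. uncountable {p\<in>P. x \<in> F p}")
    case True
    then obtain x where x: "uncountable {p\<in>P. x \<in> F p}" by blast
    define F' where "F' p = F p - {x}" for p
    have "\<forall>p\<in>{p\<in>P. x \<in> F p}. finite (F' p) \<and> card (F' p) \<le> m"
    proof
      fix p assume p: "p \<in> {p\<in>P. x \<in> F p}"
      then have "finite (F p)" "card (F p) \<le> Suc m" "x \<in> F p" using Suc.prems(2) by auto
      then show "finite (F' p) \<and> card (F' p) \<le> m" unfolding F'_def by (simp add: card_Diff_singleton)
    qed
    note IH = Suc.IH[OF x this]
    obtain P' where P'1: "P' \<subseteq> {p\<in>P. x \<in> F p}" and P'2: "uncountable P'" and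
      P'3: "\<exists>R. \<forall>p\<in>P'. \<forall>q\<in>P'. p \<noteq> q \<longrightarrow> F' p \<inter> F' q = R"
      using IH by (elim exE conjE) (rule that; (assumption | blast))
    obtain R where P': "\<forall>p\<in>P'. \<forall>q\<in>P'. p \<noteq> q \<longrightarrow> F' p \<inter> F' q = R"
      using P'3 by (elim exE)
    have "\<forall>p\<in>P'. \<forall>q\<in>P'. p \<noteq> q \<longrightarrow> F p \<inter> F q = insert x R"
    proof (intro ballI impI)
      fix p q assume pq: "p \<in> P'" "q \<in> P'" "p \<noteq> q"
      have "F' p \<inter> F' q = R" using P' pq by simp
      moreover have "x \<in> F p" "x \<in> F q" using P'1 pq by auto
      ultimately show "F p \<inter> F q = insert x R" unfolding F'_def by auto
    qed
    moreover have "P' \<subseteq> P" using P'1 by blast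
    ultimately show ?thesis by (intro ds_intro[OF _ P'2])
  next
    case False
    then have c1: "\<forall>x. countable {p\<in>P. x \<in> F p}" by blast
    have f1: "\<forall>p\<in>P. finite (F p)" using Suc.prems(2) by blast
    have "\<exists>D\<subseteq>P. uncountable D \<and> (\<forall>p\<in>D. \<forall>q\<in>D. p \<noteq> q \<longrightarrow> F p \<inter> F q = {})"
      by (rule disj_sub[OF Suc.prems(1) f1 c1])
    then obtain D where "D \<subseteq> P" "uncountable D" "\<forall>p\<in>D. \<forall>q\<in>D. p \<noteq> q \<longrightarrow> F p \<inter> F q = {}"
      by (elim exE conjE)
    then show ?thesis by (rule ds_intro)
  qed
qed

lemma comb:
  fixes F :: "'a \<Rightarrow> 'a set"
  assumes unc: "uncountable Z" and fin: "\<forall>p\<in>Z. finite (F p) \<and> p \<in> F p"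
  shows "\<exists>P R n. P \<subseteq> Z \<and> uncountable P \<and> finite R \<and> (\<forall>p\<in>P. R \<subseteq> F p \<and> p \<notin> R \<and> card (F p - R) = n)
     \<and> (\<forall>p\<in>P. \<forall>q\<in>P. p \<noteq> q \<longrightarrow> (F p - R) \<inter> (F q - R) = {})"
proof -
  obtain m where m: "uncountable {p\<in>Z. card (F p) = m}"
    using pigeon[OF unc, of UNIV "\<lambda>p. card (F p)"] by auto
  have "\<forall>p\<in>{p\<in>Z. card (F p) = m}. finite (F p) \<and> card (F p) \<le> m" using fin by auto
  from delta_system[OF m this] obtain P2 where P21: "P2 \<subseteq> {p\<in>Z. card (F p) = m}" and P22: "uncountable P2"
    and P23: "\<exists>R. \<forall>p\<in>P2. \<forall>q\<in>P2. p \<noteq> q \<longrightarrow> F p \<inter> F q = R"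
    by (elim exE conjE) (rule that; (assumption | blast))
  obtain R where P23: "\<forall>p\<in>P2. \<forall>q\<in>P2. p \<noteq> q \<longrightarrow> F p \<inter> F q = R" using P23 by (elim exE)
  have RF: "R \<subseteq> F p" if "p \<in> P2" for p
  proof -
    have "uncountable (P2 - {p})" using P22 by (intro uncountable_minus_countable) auto
    then have "P2 - {p} \<noteq> {}" by (rule unc_ne)
    then obtain q where q: "q \<in> P2" "q \<noteq> p" by auto
    then have "F p \<inter> F q = R" using P23 that by simp
    then show ?thesis by auto
  qed
  obtain p0 where p0: "p0 \<in> P2" using unc_ne[OF P22] by auto
  have finR: "finite R" using RF[OF p0] fin P21 p0 by (auto intro: finite_subset)
  define P where "P = P2 - R"
  have uncP: "uncountable P" unfolding P_def using finR P22 by (intro uncountable_minus_countable) (auto intro: countable_finite)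
  have c3: "\<forall>p\<in>P. R \<subseteq> F p \<and> p \<notin> R \<and> card (F p - R) = m - card R"
  proof
    fix p assume "p \<in> P"
    then have p: "p \<in> P2" "p \<notin> R" unfolding P_def by auto
    then have "card (F p - R) = card (F p) - card R" using RF finR by (intro card_Diff_subset) auto
    then show "R \<subseteq> F p \<and> p \<notin> R \<and> card (F p - R) = m - card R" using p RF P21 by auto
  qed
  have c4: "\<forall>p\<in>P. \<forall>q\<in>P. p \<noteq> q \<longrightarrow> (F p - R) \<inter> (F q - R) = {}"
  proof (intro ballI impI)
    fix p q assume "p \<in> P" "q \<in> P" "p \<noteq> q"
    then have "F p \<inter> F q = R" using P23 unfolding P_def by simp
    then show "(F p - R) \<inter> (F q - R) = {}" by auto
  qed
  have c1: "P \<subseteq> Z" using P21 P_def by auto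
  show ?thesis
    apply (rule exI[of _ P], rule exI[of _ R], rule exI[of _ "m - card R"])
    using c1 uncP finR c3 c4 by (intro conjI)
qed


definition Qc :: "complex set" where "Qc = (\<lambda>(a,b). Complex a b) ` (\<rat> \<times> \<rat>)"

lemma countable_Qc: "countable Qc"
  unfolding Qc_def using countable_rat by auto

lemma Qc_approx:
  assumes "r > 0" shows "\<exists>q\<in>Qc. norm (z - q) < r"
proof -
  obtain a where a: "a \<in> \<rat>" "Re z - r/2 < a" "a < Re z + r/2"
    using Rats_dense_in_real[of "Re z - r/2" "Re z + r/2"] assms by auto
  obtain b where b: "b \<in> \<rat>" "Im z - r/2 < b" "b < Im z + r/2"
    using Rats_dense_in_real[of "Im z - r/2" "Im z + r/2"] assms by auto
  have "Complex a b \<in> Qc" unfolding Qc_def using a b by auto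
  moreover have "norm (z - Complex a b) \<le> \<bar>Re (z - Complex a b)\<bar> + \<bar>Im (z - Complex a b)\<bar>"
    by (rule cmod_le)
  moreover have "\<bar>Re (z - Complex a b)\<bar> < r/2" using a(2,3) by (simp only: minus_complex.sel complex.sel abs_less_iff; linarith)
  moreover have "\<bar>Im (z - Complex a b)\<bar> < r/2" using b(2,3) by (simp only: minus_complex.sel complex.sel abs_less_iff; linarith)
  ultimately show ?thesis by force
qed

lemma sep:
  assumes Yl: "Y \<subseteq> ell1" and cC: "countable C" and supp: "\<forall>y\<in>Y. \<forall>g. g \<notin> C \<longrightarrow> y g = 0"
  shows "separable_ell1 Y"
proof -
  define E where "E = (\<lambda>(A,h). (\<lambda>g. if g \<in> A then h g else (0::complex))) ` (SIGMA A:{A. finite A \<and> A \<subseteq> C}. A \<rightarrow>\<^sub>E Qc)"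
  have cE: "countable E" unfolding E_def
    using countable_Qc cC
    by (intro countable_image countable_SIGMA countable_Collect_finite_subset countable_PiE) auto
  have El: "e \<in> ell1" if "e \<in> E" for e
    using that unfolding E_def by (auto intro!: ell1_finite)
  have dense: "\<exists>e\<in>E. ell1_norm (\<lambda>g. y g - e g) < \<epsilon>" if y: "y \<in> Y" and eps: "\<epsilon> > 0" for y \<epsilon>
  proof -
    have yl: "y \<in> ell1" using y Yl by auto
    obtain A0 where A0: "finite A0" "ell1_norm (\<lambda>g. if g \<in> A0 then 0 else y g) < \<epsilon>/2"
      using ell1_tail[OF yl, of "\<epsilon>/2"] eps by auto
    define A where "A = A0 \<inter> C"
    have finA: "finite A" using A0 A_def by auto
    define r where "r = \<epsilon> / (2 * (real (card A) + 1))"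
    have r: "r > 0" using eps r_def by auto
    have "\<forall>g. \<exists>q\<in>Qc. norm (y g - q) < r" using Qc_approx[OF r] by blast
    then obtain h where h: "\<And>g. h g \<in> Qc" "\<And>g. norm (y g - h g) < r" by metis
    define e where "e = (\<lambda>g. if g \<in> A then h g else 0)"
    have eE: "e \<in> E" unfolding E_def e_def
    proof (rule image_eqI[of _ _ "(A, restrict h A)"])
      show "(\<lambda>g. if g \<in> A then h g else 0) = (case (A, restrict h A) of (A, h) \<Rightarrow> \<lambda>g. if g \<in> A then h g else 0)"
        by auto
      show "(A, restrict h A) \<in> (SIGMA A:{A. finite A \<and> A \<subseteq> C}. A \<rightarrow>\<^sub>E Qc)"
        using finA h(1) A_def by auto
    qed
    have el: "e \<in> ell1" using El eE by auto
    have dl: "(\<lambda>g. y g - e g) \<in> ell1" using ell1_diff[OF yl el] .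
    have "ell1_norm (\<lambda>g. y g - e g) = (\<Sum>g\<in>A. norm (y g - e g)) + ell1_norm (\<lambda>g. if g \<in> A then 0 else y g - e g)"
      by (rule ell1_split[OF dl finA])
    also have "(\<lambda>g. if g \<in> A then 0 else y g - e g) = (\<lambda>g. if g \<in> A0 then 0 else y g)"
      using y supp unfolding e_def A_def by auto
    also have "(\<Sum>g\<in>A. norm (y g - e g)) \<le> real (card A) * r"
      using sum_bounded_above[of A "\<lambda>g. norm (y g - e g)" r] h(2) unfolding e_def
      by (simp add: less_imp_le)
    also have "real (card A) * r < \<epsilon>/2"
      unfolding r_def using eps by (simp add: field_simps)
    finally have "ell1_norm (\<lambda>g. y g - e g) < \<epsilon>" using A0(2) by linarith
    then show ?thesis by (rule bexI[OF _ eE])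
  qed
  define I where "I = {(e, m). e \<in> E \<and> (\<exists>y\<in>Y. ell1_norm (\<lambda>g. y g - e g) < 1 / real (Suc m))}"
  define pick where "pick = (\<lambda>(e, m::nat). SOME y. y \<in> Y \<and> ell1_norm (\<lambda>g. y g - e g) < 1 / real (Suc m))"
  have pick: "pick (e, m) \<in> Y \<and> ell1_norm (\<lambda>g. pick (e, m) g - e g) < 1 / real (Suc m)" if "(e, m) \<in> I" for e m
  proof -
    from that have ex: "\<exists>y. y \<in> Y \<and> ell1_norm (\<lambda>g. y g - e g) < 1 / real (Suc m)" unfolding I_def by auto
    show ?thesis unfolding pick_def using someI_ex[OF ex] by simp
  qed
  define D where "D = pick ` I"
  have cD: "countable D" unfolding D_def
  proof (rule countable_image)
    have "I \<subseteq> E \<times> UNIV" unfolding I_def by auto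
    moreover have "countable (E \<times> (UNIV :: nat set))" using cE by auto
    ultimately show "countable I" by (rule countable_subset)
  qed
  have DY: "D \<subseteq> Y" unfolding D_def using pick by auto
  have all: "\<forall>y\<in>Y. \<forall>\<epsilon>>0. \<exists>d\<in>D. ell1_norm (\<lambda>g. y g - d g) < \<epsilon>"
  proof (intro ballI allI impI)
    fix y \<epsilon> assume y: "y \<in> Y" and eps: "(\<epsilon>::real) > 0"
    obtain n where n: "n > 0" "inverse (real n) < \<epsilon>/2"
      using ex_inverse_of_nat_less[of "\<epsilon>/2"] eps by auto
    define m where "m = n - 1"
    have m: "inverse (real (Suc m)) < \<epsilon>/2" using n unfolding m_def by simp
    obtain e where e: "e \<in> E" "ell1_norm (\<lambda>g. y g - e g) < 1 / real (Suc m)"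
      using dense[OF y, of "1 / real (Suc m)"] by auto
    have em: "(e, m) \<in> I" unfolding I_def using e y by auto
    define d where "d = pick (e, m)"
    have d: "d \<in> D" "d \<in> Y" "ell1_norm (\<lambda>g. d g - e g) < 1 / real (Suc m)"
      using pick[OF em] em unfolding d_def D_def by auto
    have yl: "y \<in> ell1" "d \<in> ell1" "e \<in> ell1" using y d Yl El e by auto
    have "ell1_norm (\<lambda>g. y g - d g) \<le> ell1_norm (\<lambda>g. y g - e g) + ell1_norm (\<lambda>g. e g - d g)"
      by (rule ell1_tri) (use yl in auto)
    also have "ell1_norm (\<lambda>g. e g - d g) = ell1_norm (\<lambda>g. d g - e g)"
      unfolding ell1_norm_def by (simp add: norm_minus_commute)
    finally have "ell1_norm (\<lambda>g. y g - d g) < \<epsilon>" using e(2) d(3) m by (simp add: inverse_eq_divide)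
    then show "\<exists>d\<in>D. ell1_norm (\<lambda>g. y g - d g) < \<epsilon>" by (rule bexI[OF _ d(1)])
  qed
  show ?thesis unfolding separable_ell1_def by (rule exI[of _ D], intro conjI cD DY all)
qed


definition posf :: "(nat \<Rightarrow> 'a) \<Rightarrow> ('a + nat) \<Rightarrow> 'a" where
  "posf X \<alpha> = (case \<alpha> of Inl r \<Rightarrow> r | Inr j \<Rightarrow> X j)"

lemma nth_bij:
  fixes a :: "'a::linorder set"
  assumes "finite a" "card a = n"
  shows "bij_betw (nth_elem a) {..<n} a"
proof -
  have "bij_betw ((!) (sorted_list_of_set a)) {..<n} a"
    by (rule bij_betw_nth) (use assms in auto)
  moreover have "nth_elem a = (!) (sorted_list_of_set a)" unfolding nth_elem_def by (rule ext) simp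
  ultimately show ?thesis by simp
qed

lemma nth_in: "finite a \<Longrightarrow> card a = n \<Longrightarrow> i < n \<Longrightarrow> nth_elem a i \<in> (a::'a::linorder set)"
  using nth_bij bij_betwE by blast

lemma bij_pos:
  fixes a :: "'a::linorder set"
  assumes "finite a" "card a = n" "R \<inter> a = {}"
  shows "bij_betw (posf (nth_elem a)) (R <+> {..<n}) (R \<union> a)"
proof -
  have b: "bij_betw (nth_elem a) {..<n} a" by (rule nth_bij[OF assms(1,2)])
  have inj: "inj_on (posf (nth_elem a)) (R <+> {..<n})"
  proof (rule inj_onI)
    fix x y assume x: "x \<in> R <+> {..<n}" and y: "y \<in> R <+> {..<n}" and e: "posf (nth_elem a) x = posf (nth_elem a) y"
    show "x = y"
    proof (cases x)
      case (Inl r)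
      then have r: "r \<in> R" using x by auto
      show ?thesis
      proof (cases y)
        case (Inl r') then show ?thesis using e \<open>x = Inl r\<close> by (simp add: posf_def)
      next
        case (Inr j)
        then have "j < n" using y by auto
        then have "nth_elem a j \<in> a" using b bij_betwE by blast
        then show ?thesis using e Inl Inr r assms(3) by (auto simp: posf_def)
      qed
    next
      case (Inr i)
      then have i: "i < n" using x by auto
      then have ia: "nth_elem a i \<in> a" using b bij_betwE by blast
      show ?thesis
      proof (cases y)
        case (Inl r')
        then have "r' \<in> R" using y by auto
        then show ?thesis using e Inl Inr ia assms(3) by (auto simp: posf_def)
      next
        case (Inr j)
        then have "j < n" using y by auto
        then have "i = j" using e Inr \<open>x = Inr i\<close> i b unfolding bij_betw_def inj_on_def by (auto simp: posf_def)
        then show ?thesis using Inr \<open>x = Inr i\<close> by simp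
      qed
    qed
  qed
  have img: "posf (nth_elem a) ` (R <+> {..<n}) = R \<union> a"
  proof -
    have "posf (nth_elem a) ` (R <+> {..<n}) = R \<union> nth_elem a ` {..<n}"
      unfolding Plus_def image_Un image_image by (simp add: posf_def)
    also have "nth_elem a ` {..<n} = a" using b by (simp add: bij_betw_def)
    finally show ?thesis .
  qed
  show ?thesis unfolding bij_betw_def using inj img by simp
qed

lemma err_bound:
  fixes G :: "'j \<Rightarrow> 'j \<Rightarrow> complex"
  assumes "finite J"
    and h: "\<And>\<alpha>. \<alpha> \<in> J \<Longrightarrow> norm (u \<alpha> - v \<alpha>) \<le> e \<and> norm (u' \<alpha> - v \<alpha>) \<le> e \<and> norm (u' \<alpha>) \<le> 1 \<and> norm (v \<alpha>) \<le> 1"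
    and g: "\<And>\<alpha> \<beta>. \<alpha> \<in> J \<Longrightarrow> \<beta> \<in> J \<Longrightarrow> norm (G \<alpha> \<beta>) \<le> 1"
  shows "norm ((\<Sum>\<alpha>\<in>J. \<Sum>\<beta>\<in>J. G \<alpha> \<beta> * u \<alpha> * u' \<beta>) - (\<Sum>\<alpha>\<in>J. \<Sum>\<beta>\<in>J. G \<alpha> \<beta> * v \<alpha> * v \<beta>))
      \<le> real (card J) * (real (card J) * (2 * e))"
proof -
  have trm: "norm (G \<alpha> \<beta> * u \<alpha> * u' \<beta> - G \<alpha> \<beta> * v \<alpha> * v \<beta>) \<le> 2 * e" if "\<alpha> \<in> J" "\<beta> \<in> J" for \<alpha> \<beta>
  proof -
    have e0: "0 \<le> e" using h[OF that(1)] by (meson norm_ge_zero order_trans)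
    have "G \<alpha> \<beta> * u \<alpha> * u' \<beta> - G \<alpha> \<beta> * v \<alpha> * v \<beta> = G \<alpha> \<beta> * ((u \<alpha> - v \<alpha>) * u' \<beta> + v \<alpha> * (u' \<beta> - v \<beta>))"
      by (simp add: algebra_simps)
    also have "norm \<dots> \<le> 1 * (norm ((u \<alpha> - v \<alpha>) * u' \<beta>) + norm (v \<alpha> * (u' \<beta> - v \<beta>)))"
      unfolding norm_mult[of "G \<alpha> \<beta>"] by (rule mult_mono) (use g[OF that] norm_triangle_ineq[of "(u \<alpha> - v \<alpha>) * u' \<beta>" "v \<alpha> * (u' \<beta> - v \<beta>)"] in auto)
    also have "norm ((u \<alpha> - v \<alpha>) * u' \<beta>) \<le> e * 1"
      unfolding norm_mult by (rule mult_mono) (use h[OF that(1)] h[OF that(2)] e0 in auto)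
    also have "norm (v \<alpha> * (u' \<beta> - v \<beta>)) \<le> 1 * e"
      unfolding norm_mult by (rule mult_mono) (use h[OF that(1)] h[OF that(2)] e0 in auto)
    finally show ?thesis by simp
  qed
  have "(\<Sum>\<alpha>\<in>J. \<Sum>\<beta>\<in>J. G \<alpha> \<beta> * u \<alpha> * u' \<beta>) - (\<Sum>\<alpha>\<in>J. \<Sum>\<beta>\<in>J. G \<alpha> \<beta> * v \<alpha> * v \<beta>)
      = (\<Sum>\<alpha>\<in>J. \<Sum>\<beta>\<in>J. G \<alpha> \<beta> * u \<alpha> * u' \<beta> - G \<alpha> \<beta> * v \<alpha> * v \<beta>)"
    by (simp add: sum_subtractf)
  also have "norm \<dots> \<le> (\<Sum>\<alpha>\<in>J. norm (\<Sum>\<beta>\<in>J. G \<alpha> \<beta> * u \<alpha> * u' \<beta> - G \<alpha> \<beta> * v \<alpha> * v \<beta>))"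
    by (rule norm_sum)
  also have "\<dots> \<le> (\<Sum>\<alpha>\<in>J. real (card J) * (2 * e))"
  proof (rule sum_mono)
    fix \<alpha> assume a: "\<alpha> \<in> J"
    have "norm (\<Sum>\<beta>\<in>J. G \<alpha> \<beta> * u \<alpha> * u' \<beta> - G \<alpha> \<beta> * v \<alpha> * v \<beta>) \<le> (\<Sum>\<beta>\<in>J. norm (G \<alpha> \<beta> * u \<alpha> * u' \<beta> - G \<alpha> \<beta> * v \<alpha> * v \<beta>))"
      by (rule norm_sum)
    also have "\<dots> \<le> (\<Sum>\<beta>\<in>J. 2 * e)" by (rule sum_mono) (rule trm[OF a])
    finally show "norm (\<Sum>\<beta>\<in>J. G \<alpha> \<beta> * u \<alpha> * u' \<beta> - G \<alpha> \<beta> * v \<alpha> * v \<beta>) \<le> real (card J) * (2 * e)" by simp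
  qed
  also have "\<dots> = real (card J) * (real (card J) * (2 * e))" by simp
  finally show ?thesis .
qed

lemma delta_sum:
  fixes G1 G2 :: "'j \<Rightarrow> 'j \<Rightarrow> complex"
  assumes "finite J" "c \<in> J"
    and h: "\<And>\<alpha> \<beta>. \<alpha> \<in> J \<Longrightarrow> \<beta> \<in> J \<Longrightarrow> G1 \<alpha> \<beta> - G2 \<alpha> \<beta> = (if \<alpha> = c \<and> \<beta> = c then 1 else 0)"
  shows "(\<Sum>\<alpha>\<in>J. \<Sum>\<beta>\<in>J. G1 \<alpha> \<beta> * v \<alpha> * v \<beta>) - (\<Sum>\<alpha>\<in>J. \<Sum>\<beta>\<in>J. G2 \<alpha> \<beta> * v \<alpha> * v \<beta>) = v c * v c"
proof -
  have "(\<Sum>\<alpha>\<in>J. \<Sum>\<beta>\<in>J. G1 \<alpha> \<beta> * v \<alpha> * v \<beta>) - (\<Sum>\<alpha>\<in>J. \<Sum>\<beta>\<in>J. G2 \<alpha> \<beta> * v \<alpha> * v \<beta>)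
     = (\<Sum>\<alpha>\<in>J. \<Sum>\<beta>\<in>J. (G1 \<alpha> \<beta> - G2 \<alpha> \<beta>) * v \<alpha> * v \<beta>)"
    by (simp add: sum_subtractf algebra_simps)
  also have "\<dots> = (\<Sum>\<alpha>\<in>J. \<Sum>\<beta>\<in>J. (if \<alpha> = c \<and> \<beta> = c then v \<alpha> * v \<beta> else 0))"
    by (rule sum.cong[OF refl], rule sum.cong[OF refl]) (simp add: h)
  also have "\<dots> = (\<Sum>\<alpha>\<in>J. (if \<alpha> = c then v \<alpha> * v c else 0))"
    by (rule sum.cong[OF refl]) (use assms in auto)
  also have "\<dots> = v c * v c" using assms by simp
  finally show ?thesis .
qed

lemma rnd_close:
  assumes "s > 0" "\<lfloor>Re z / s\<rfloor> = \<lfloor>Re z' / s\<rfloor>" "\<lfloor>Im z / s\<rfloor> = \<lfloor>Im z' / s\<rfloor>"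
  shows "norm (z - z') \<le> 2 * s"
proof -
  have fl: "\<bar>x - x'\<bar> \<le> s" if "\<lfloor>x / s\<rfloor> = \<lfloor>x' / s\<rfloor>" for x x'
  proof -
    define m where "m = \<lfloor>x / s\<rfloor>"
    have m1: "\<lfloor>x / s\<rfloor> = m" "\<lfloor>x' / s\<rfloor> = m" using that m_def by auto
    have "of_int m \<le> x / s \<and> x / s < of_int m + 1" using m1(1) by (simp only: floor_eq_iff)
    moreover have "of_int m \<le> x' / s \<and> x' / s < of_int m + 1" using m1(2) by (simp only: floor_eq_iff)
    ultimately have "\<bar>x / s - x' / s\<bar> \<le> 1" by linarith
    then have "\<bar>(x - x') / s\<bar> \<le> 1" by (simp add: diff_divide_distrib)
    then have "\<bar>x - x'\<bar> / s \<le> 1" using assms(1) by (simp add: abs_divide)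
    then show ?thesis using assms(1) by (simp add: pos_divide_le_eq)
  qed
  have "norm (z - z') \<le> \<bar>Re (z - z')\<bar> + \<bar>Im (z - z')\<bar>" by (rule cmod_le)
  also have "\<dots> \<le> s + s" using fl[OF assms(2)] fl[OF assms(3)] by simp
  finally show ?thesis by simp
qed

lemma gdiff:
  fixes f :: "'a::wellorder set \<Rightarrow> nat"
  assumes "\<alpha> \<in> R <+> {..<n}" "\<beta> \<in> R <+> {..<n}"
    and hA: "\<forall>r\<in>R. \<forall>j<n. (f {r, A1 j} = 1 \<longleftrightarrow> f {r, A2 j} = 1)"
    and hC: "\<forall>r\<in>R. \<forall>i<n. (f {r, C1 i} = 1 \<longleftrightarrow> f {r, C2 i} = 1)"
    and hR: "\<forall>r\<in>R. \<forall>j<n. r \<noteq> A1 j \<and> r \<noteq> A2 j \<and> r \<noteq> C1 j \<and> r \<noteq> C2 j"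
    and hD: "\<forall>i<n. \<forall>j<n. C1 i \<noteq> A1 j \<and> C2 i \<noteq> A2 j"
    and k1: "f {C1 k, A1 k} = 1" and k2: "f {C2 k, A2 k} = 0"
    and hE: "\<forall>i<n. \<forall>j<n. (i, j) \<noteq> (k, k) \<longrightarrow> f {C1 i, A1 j} = f {C2 i, A2 j}"
  shows "gc f (posf C1 \<alpha>) (posf A1 \<beta>) - gc f (posf C2 \<alpha>) (posf A2 \<beta>) = (if \<alpha> = Inr k \<and> \<beta> = Inr k then 1 else 0)"
proof (cases \<alpha>)
  case (Inl r)
  then have r: "r \<in> R" using assms(1) by auto
  show ?thesis
  proof (cases \<beta>)
    case (Inl r') then show ?thesis using \<open>\<alpha> = Inl r\<close> by (simp add: posf_def)
  next
    case (Inr j)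
    then have j: "j < n" using assms(2) by auto
    show ?thesis using Inr \<open>\<alpha> = Inl r\<close> hA r j hR by (auto simp: posf_def gc_def)
  qed
next
  case (Inr i)
  then have i: "i < n" using assms(1) by auto
  show ?thesis
  proof (cases \<beta>)
    case (Inl r)
    then have r: "r \<in> R" using assms(2) by auto
    have "f {C1 i, r} = f {r, C1 i}" "f {C2 i, r} = f {r, C2 i}" by (simp_all add: insert_commute)
    then show ?thesis using Inl \<open>\<alpha> = Inr i\<close> hC r i hR by (auto simp: posf_def gc_def)
  next
    case (Inr j)
    then have j: "j < n" using assms(2) by auto
    show ?thesis
    proof (cases "i = k \<and> j = k")
      case True
      then show ?thesis using Inr \<open>\<alpha> = Inr i\<close> k1 k2 hD i by (auto simp: posf_def gc_def)
    next
      case False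
      then have "f {C1 i, A1 j} = f {C2 i, A2 j}" using hE i j by auto
      then show ?thesis using Inr \<open>\<alpha> = Inr i\<close> False hD i j by (auto simp: posf_def gc_def)
    qed
  qed
qed


lemma arith_help:
  fixes c t :: real
  assumes "c \<ge> 0"
  shows "c * (2 * (t / (16 * (c + 1)))) = t / 8 * (c / (c + 1))"
proof -
  have "c + 1 \<noteq> 0" using assms by linarith
  then show ?thesis by (simp add: field_simps)
qed

lemma gc_norm: "norm (gc f i j) \<le> 1"
  by (simp add: gc_def)

lemma main_contra:
  fixes f :: "'a::wellorder set \<Rightarrow> nat" and Y :: "('a \<Rightarrow> complex) set" and Z :: "'a set"
  assumes f01: "\<forall>\<alpha> \<beta>. \<alpha> \<noteq> \<beta> \<longrightarrow> f {\<alpha>, \<beta>} \<in> {0, 1}"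
    and pfk: "partition_first_kind f"
    and Yl: "Y \<subseteq> ell1"
    and B0: "\<And>y z. y \<in> Y \<Longrightarrow> z \<in> Y \<Longrightarrow> Bf f y z = 0"
    and th: "\<theta> > 0"
    and Zu: "uncountable Z"
    and Zy: "\<forall>p\<in>Z. \<exists>y. y \<in> Y \<and> ell1_norm y \<le> 1 \<and> \<theta> \<le> norm (y p)"
  shows False
proof -
  define \<delta> where "\<delta> = \<theta>^2 / 8"
  have \<delta>: "\<delta> > 0" using th by (simp add: \<delta>_def)
  from bchoice[OF Zy] obtain y where y: "\<forall>p\<in>Z. y p \<in> Y \<and> ell1_norm (y p) \<le> 1 \<and> \<theta> \<le> norm (y p p)"
    by auto
  have yl: "y p \<in> ell1" if "p \<in> Z" for p using y that Yl by auto
  have yY: "y p \<in> Y" if "p \<in> Z" for p using y that by auto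
  have yN: "ell1_norm (y p) \<le> 1" if "p \<in> Z" for p using y that by auto
  have ypt: "norm (y p g) \<le> 1" if "p \<in> Z" for p g using ell1_point[OF yl[OF that], of g] yN[OF that] by simp
  have "\<forall>p\<in>Z. \<exists>F. finite F \<and> p \<in> F \<and> ell1_norm (\<lambda>g. if g \<in> F then 0 else y p g) < \<delta>"
  proof
    fix p assume p: "p \<in> Z"
    obtain F0 where F0: "finite F0" "ell1_norm (\<lambda>g. if g \<in> F0 then 0 else y p g) < \<delta>"
      using ell1_tail[OF yl[OF p] \<delta>] by auto
    have "ell1_norm (\<lambda>g. if g \<in> insert p F0 then 0 else y p g) \<le> ell1_norm (\<lambda>g. if g \<in> F0 then 0 else y p g)"
      by (rule ell1_norm_mono[OF ell1_restrict'[OF yl[OF p]]]) auto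
    then have "finite (insert p F0) \<and> p \<in> insert p F0 \<and> ell1_norm (\<lambda>g. if g \<in> insert p F0 then 0 else y p g) < \<delta>"
      using F0 by auto
    then show "\<exists>F. finite F \<and> p \<in> F \<and> ell1_norm (\<lambda>g. if g \<in> F then 0 else y p g) < \<delta>"
      by (rule exI)
  qed
  from bchoice[OF this] obtain F where F: "\<forall>p\<in>Z. finite (F p) \<and> p \<in> F p \<and> ell1_norm (\<lambda>g. if g \<in> F p then 0 else y p g) < \<delta>"
    by auto
  have Fp: "\<forall>p\<in>Z. finite (F p) \<and> p \<in> F p" using F by auto
  obtain P R n where PZ: "P \<subseteq> Z" and Pu: "uncountable P" and finR: "finite R"
    and PR: "\<forall>p\<in>P. R \<subseteq> F p \<and> p \<notin> R \<and> card (F p - R) = n"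
    and Pd: "\<forall>p\<in>P. \<forall>q\<in>P. p \<noteq> q \<longrightarrow> (F p - R) \<inter> (F q - R) = {}"
    using comb[OF Zu Fp] by (elim exE conjE) (rule that)
  define a where "a p = F p - R" for p
  have ap: "finite (a p) \<and> card (a p) = n \<and> p \<in> a p \<and> R \<inter> a p = {} \<and> F p = R \<union> a p" if "p \<in> P" for p
    using that PR Fp PZ unfolding a_def by auto
  have adisj: "a p \<inter> a q = {}" if "p \<in> P" "q \<in> P" "p \<noteq> q" for p q
    using Pd that unfolding a_def by simp
  define J where "J = R <+> {..<n}"
  have finJ: "finite J" unfolding J_def using finR by simp
  define pos where "pos p = posf (nth_elem (a p))" for p
  have bij: "bij_betw (pos p) J (F p)" if "p \<in> P" for p
  proof -
    have "bij_betw (posf (nth_elem (a p))) (R <+> {..<n}) (R \<union> a p)"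
      by (rule bij_pos) (use ap[OF that] in auto)
    then show ?thesis unfolding pos_def J_def using ap[OF that] by simp
  qed
  have nthin: "nth_elem (a p) j \<in> a p" if "p \<in> P" "j < n" for p j
    using nth_in[of "a p" n j] ap[OF that(1)] that(2) by auto
  define cJ where "cJ = real (card J)"
  define e where "e = \<theta>^2 / (16 * (cJ * cJ + 1))"
  have e: "e > 0"
  proof -
    have "0 \<le> cJ * cJ" by simp
    then have d: "0 < 16 * (cJ * cJ + 1)" by (intro mult_pos_pos) linarith+
    have "0 < \<theta>^2" using th by simp
    then show ?thesis unfolding e_def using d by (rule divide_pos_pos)
  qed
  define s where "s = e / 2"
  have s: "s > 0" using e s_def by simp
  define rnd where "rnd z = (\<lfloor>Re z / s\<rfloor>, \<lfloor>Im z / s\<rfloor>)" for z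
  define kk where "kk p = (SOME k. k < n \<and> nth_elem (a p) k = p)" for p
  have kk: "kk p < n \<and> nth_elem (a p) (kk p) = p" if "p \<in> P" for p
  proof -
    have "p \<in> nth_elem (a p) ` {..<n}"
      using nth_bij[of "a p" n] ap[OF that] by (simp add: bij_betw_def)
    then have ex: "\<exists>k. k < n \<and> nth_elem (a p) k = p" by auto
    show ?thesis unfolding kk_def using someI_ex[OF ex] .
  qed
  define G where "G p = {(r,j). r \<in> R \<and> j < n \<and> f {r, nth_elem (a p) j} = 1}" for p
  define col where "col p = (kk p, G p, restrict (\<lambda>\<alpha>. rnd (y p (pos p \<alpha>))) J)" for p
  define CS where "CS = (UNIV :: nat set) \<times> Pow (R \<times> {..<n}) \<times> (J \<rightarrow>\<^sub>E (UNIV :: (int \<times> int) set))"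
  have cCS: "countable CS" unfolding CS_def
    using finR finJ by (intro countable_SIGMA countable_PiE) (auto intro: countable_finite)
  have colS: "col p \<in> CS" for p
    unfolding col_def CS_def G_def by auto
  have "\<exists>v. uncountable {p\<in>P. col p = v}" by (rule pigeon[OF Pu cCS]) (rule colS)
  then obtain v0 where P4u: "uncountable {p\<in>P. col p = v0}" by (elim exE)
  define P4 where "P4 = {p\<in>P. col p = v0}"
  have P4u': "uncountable P4" using P4u P4_def by simp
  have P4P: "P4 \<subseteq> P" unfolding P4_def by auto
  obtain p0 where p0: "p0 \<in> P4" using unc_ne[OF P4u'] by auto
  have colp: "col p = col p0" if "p \<in> P4" for p using that p0 unfolding P4_def by simp
  define k where "k = kk p0"
  have k: "k < n" "nth_elem (a p0) k = p0" using kk[of p0] p0 P4P unfolding k_def by auto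
  have Gp: "G p = G p0" if "p \<in> P4" for p using colp[OF that] unfolding col_def by simp
  have rndp: "rnd (y p (pos p \<alpha>)) = rnd (y p0 (pos p0 \<alpha>))" if "p \<in> P4" "\<alpha> \<in> J" for p \<alpha>
  proof -
    have "restrict (\<lambda>\<alpha>. rnd (y p (pos p \<alpha>))) J = restrict (\<lambda>\<alpha>. rnd (y p0 (pos p0 \<alpha>))) J"
      using colp[OF that(1)] unfolding col_def by simp
    then have "restrict (\<lambda>\<alpha>. rnd (y p (pos p \<alpha>))) J \<alpha> = restrict (\<lambda>\<alpha>. rnd (y p0 (pos p0 \<alpha>))) J \<alpha>"
      by simp
    then show ?thesis using that(2) by simp
  qed
  define v where "v \<alpha> = y p0 (pos p0 \<alpha>)" for \<alpha>
  have close: "norm (y p (pos p \<alpha>) - v \<alpha>) \<le> e" if "p \<in> P4" "\<alpha> \<in> J" for p \<alpha>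
  proof -
    have "norm (y p (pos p \<alpha>) - v \<alpha>) \<le> 2 * s"
      by (rule rnd_close[OF s]) (use rndp[OF that] in \<open>simp_all add: rnd_def v_def\<close>)
    then show ?thesis unfolding s_def by simp
  qed
  define A where "A = a ` P4"
  have injA: "inj_on a P4"
  proof (rule inj_onI)
    fix p q assume pq: "p \<in> P4" "q \<in> P4" "a p = a q"
    show "p = q"
    proof (rule ccontr)
      assume "p \<noteq> q"
      then have "a p \<inter> a q = {}" using adisj pq P4P by auto
      moreover have "p \<in> a p" using ap pq P4P by auto
      ultimately show False using pq(3) by auto
    qed
  qed
  have Au: "uncountable A"
  proof
    assume "countable A"
    then have "countable P4" using countable_image_inj_on[OF _ injA] A_def by simp
    then show False using P4u' by simp
  qed
  have Ad: "pairwise disjnt A"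
    unfolding pairwise_def disjnt_def A_def
  proof (intro ballI impI)
    fix x z assume "x \<in> a ` P4" "z \<in> a ` P4" "x \<noteq> z"
    then obtain p q where "p \<in> P4" "q \<in> P4" "x = a p" "z = a q" "p \<noteq> q" by auto
    then show "x \<inter> z = {}" using adisj P4P by auto
  qed
  have Ac: "\<forall>x\<in>A. finite x \<and> card x = n" unfolding A_def using ap P4P by auto
  have "\<forall>k<n. \<exists>a\<in>A. \<exists>b\<in>A. \<exists>a'\<in>A. \<exists>b'\<in>A. a \<noteq> b \<and> a' \<noteq> b' \<and>
            f {nth_elem a k, nth_elem b k} = 1 \<and>
            f {nth_elem a' k, nth_elem b' k} = 0 \<and>
            (\<forall>i<n. \<forall>j<n. (i, j) \<noteq> (k, k) \<longrightarrow>
               f {nth_elem a i, nth_elem b j} = f {nth_elem a' i, nth_elem b' j})"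
    using pfk[unfolded partition_first_kind_def, THEN spec[of _ n], THEN spec[of _ A]] Au Ad Ac by simp
  then have "\<exists>a\<in>A. \<exists>b\<in>A. \<exists>a'\<in>A. \<exists>b'\<in>A. a \<noteq> b \<and> a' \<noteq> b' \<and>
            f {nth_elem a k, nth_elem b k} = 1 \<and>
            f {nth_elem a' k, nth_elem b' k} = 0 \<and>
            (\<forall>i<n. \<forall>j<n. (i, j) \<noteq> (k, k) \<longrightarrow>
               f {nth_elem a i, nth_elem b j} = f {nth_elem a' i, nth_elem b' j})"
    using k(1) by simp
  then obtain a1 b1 a1' b1' where ab: "a1 \<in> A" "b1 \<in> A" "a1' \<in> A" "b1' \<in> A" "a1 \<noteq> b1" "a1' \<noteq> b1'"
    "f {nth_elem a1 k, nth_elem b1 k} = 1" "f {nth_elem a1' k, nth_elem b1' k} = 0"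
    "\<forall>i<n. \<forall>j<n. (i, j) \<noteq> (k, k) \<longrightarrow> f {nth_elem a1 i, nth_elem b1 j} = f {nth_elem a1' i, nth_elem b1' j}"
    by (elim bexE conjE) (rule that)
  obtain p where p: "p \<in> P4" "a1 = a p" using ab(1) A_def by auto
  obtain q where q: "q \<in> P4" "b1 = a q" using ab(2) A_def by auto
  obtain p' where p': "p' \<in> P4" "a1' = a p'" using ab(3) A_def by auto
  obtain q' where q': "q' \<in> P4" "b1' = a q'" using ab(4) A_def by auto
  have pq: "p \<noteq> q" using ab(5) p q by auto
  have pq': "p' \<noteq> q'" using ab(6) p' q' by auto
  define T where "T p q = (\<Sum>\<alpha>\<in>J. \<Sum>\<beta>\<in>J. gc f (pos p \<alpha>) (pos q \<beta>) * y p (pos p \<alpha>) * y q (pos q \<beta>))" for p q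
  define T0 where "T0 p q = (\<Sum>\<alpha>\<in>J. \<Sum>\<beta>\<in>J. gc f (pos p \<alpha>) (pos q \<beta>) * v \<alpha> * v \<beta>)" for p q
  have E1: "norm (T p q) \<le> 2 * \<delta>" if pP: "p \<in> P" and qP: "q \<in> P" for p q
  proof -
    have pZ: "p \<in> Z" and qZ: "q \<in> Z" using pP qP PZ by auto
    define w where "w p = (\<lambda>g. if g \<in> F p then y p g else 0)" for p
    define tl where "tl p = (\<lambda>g. if g \<in> F p then 0 else y p g)" for p
    have wl: "w p \<in> ell1" "w q \<in> ell1" unfolding w_def by (auto intro: ell1_restrict yl pZ qZ)
    have tll: "tl p \<in> ell1" "tl q \<in> ell1" unfolding tl_def by (auto intro: ell1_restrict' yl pZ qZ)
    have tlN: "ell1_norm (tl p) < \<delta>" "ell1_norm (tl q) < \<delta>" using F pZ qZ unfolding tl_def by auto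
    have wN: "ell1_norm (w p) \<le> 1"
    proof -
      have "ell1_norm (w p) \<le> ell1_norm (y p)"
        unfolding w_def by (rule ell1_norm_mono[OF yl[OF pZ]]) auto
      then show ?thesis using yN[OF pZ] by simp
    qed
    have tleq: "(\<lambda>g. y r g - w r g) = tl r" for r unfolding w_def tl_def by auto
    have d1: "Bf f (tl p) (y q) = Bf f (y p) (y q) - Bf f (w p) (y q)"
      using Bf_diff_left[OF yl[OF pZ] wl(1) yl[OF qZ], of f] tleq by simp
    have d2: "Bf f (w p) (tl q) = Bf f (w p) (y q) - Bf f (w p) (w q)"
      using Bf_diff_right[OF wl(1) yl[OF qZ] wl(2), of f] tleq by simp
    have BW: "Bf f (w p) (w q) = T p q"
    proof -
      have fin: "finite (F p)" "finite (F q)" using F pZ qZ by auto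
      have "Bf f (w p) (w q) = (\<Sum>i\<in>F p. \<Sum>j\<in>F q. gc f i j * w p i * w q j)"
        by (rule Bf_finite[OF fin]) (auto simp: w_def)
      also have "\<dots> = (\<Sum>i\<in>F p. \<Sum>j\<in>F q. gc f i j * y p i * y q j)"
        by (rule sum.cong[OF refl], rule sum.cong[OF refl]) (auto simp: w_def)
      also have "\<dots> = (\<Sum>\<alpha>\<in>J. \<Sum>j\<in>F q. gc f (pos p \<alpha>) j * y p (pos p \<alpha>) * y q j)"
        by (rule sum.reindex_bij_betw[OF bij[OF pP], symmetric])
      also have "\<dots> = T p q"
        unfolding T_def
        by (rule sum.cong[OF refl], rule sum.reindex_bij_betw[OF bij[OF qP], symmetric])
      finally show ?thesis .
    qed
    have "T p q = Bf f (y p) (y q) - Bf f (tl p) (y q) - Bf f (w p) (tl q)"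
      using BW d1 d2 by simp
    also have "Bf f (y p) (y q) = 0" by (rule B0[OF yY[OF pZ] yY[OF qZ]])
    finally have Teq: "T p q = - (Bf f (tl p) (y q) + Bf f (w p) (tl q))" by simp
    have "norm (T p q) \<le> norm (Bf f (tl p) (y q)) + norm (Bf f (w p) (tl q))"
      unfolding Teq norm_minus_cancel by (rule norm_triangle_ineq)
    also have "norm (Bf f (tl p) (y q)) \<le> ell1_norm (tl p) * ell1_norm (y q)"
      by (rule Bf_bound[OF tll(1) yl[OF qZ]])
    also have "\<dots> \<le> \<delta> * 1"
      by (rule mult_mono) (use tlN yN[OF qZ] ell1_nonneg[of "y q"] \<delta> in auto)
    also have "norm (Bf f (w p) (tl q)) \<le> ell1_norm (w p) * ell1_norm (tl q)"
      by (rule Bf_bound[OF wl(1) tll(2)])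
    also have "\<dots> \<le> 1 * \<delta>"
      by (rule mult_mono) (use tlN wN ell1_nonneg[of "tl q"] \<delta> in auto)
    finally show ?thesis by simp
  qed
  have E2: "norm (T p q - T0 p q) \<le> cJ * (cJ * (2 * e))" if pP: "p \<in> P4" and qP: "q \<in> P4" for p q
    unfolding T_def T0_def cJ_def
  proof (rule err_bound[OF finJ])
    fix \<alpha> assume "\<alpha> \<in> J"
    then show "norm (y p (pos p \<alpha>) - v \<alpha>) \<le> e \<and> norm (y q (pos q \<alpha>) - v \<alpha>) \<le> e \<and>
      norm (y q (pos q \<alpha>)) \<le> 1 \<and> norm (v \<alpha>) \<le> 1"
      using close[OF pP] close[OF qP] ypt P4P PZ pP qP p0 unfolding v_def by auto
  next
    fix \<alpha> \<beta> show "norm (gc f (pos p \<alpha>) (pos q \<beta>)) \<le> 1" by (rule gc_norm)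
  qed
  have E3: "T0 p q - T0 p' q' = v (Inr k) * v (Inr k)"
    unfolding T0_def
  proof (rule delta_sum[OF finJ])
    show "Inr k \<in> J" unfolding J_def using k by auto
  next
    fix \<alpha> \<beta> assume \<alpha>: "\<alpha> \<in> J" and \<beta>: "\<beta> \<in> J"
    have PP: "p \<in> P" "q \<in> P" "p' \<in> P" "q' \<in> P" using p q p' q' P4P by auto
    show "gc f (pos p \<alpha>) (pos q \<beta>) - gc f (pos p' \<alpha>) (pos q' \<beta>) = (if \<alpha> = Inr k \<and> \<beta> = Inr k then 1 else 0)"
      unfolding pos_def
    proof (rule gdiff)
      show "\<alpha> \<in> R <+> {..<n}" "\<beta> \<in> R <+> {..<n}" using \<alpha> \<beta> J_def by auto
      show "\<forall>r\<in>R. \<forall>j<n. (f {r, nth_elem (a q) j} = 1) = (f {r, nth_elem (a q') j} = 1)"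
      proof (intro ballI allI impI)
        fix r j assume r: "r \<in> R" and j: "j < n"
        have "((r, j) \<in> G q) = ((r, j) \<in> G q')" using Gp[OF q(1)] Gp[OF q'(1)] by simp
        then show "(f {r, nth_elem (a q) j} = 1) = (f {r, nth_elem (a q') j} = 1)"
          using r j unfolding G_def by simp
      qed
      show "\<forall>r\<in>R. \<forall>i<n. (f {r, nth_elem (a p) i} = 1) = (f {r, nth_elem (a p') i} = 1)"
      proof (intro ballI allI impI)
        fix r j assume r: "r \<in> R" and j: "j < n"
        have "((r, j) \<in> G p) = ((r, j) \<in> G p')" using Gp[OF p(1)] Gp[OF p'(1)] by simp
        then show "(f {r, nth_elem (a p) j} = 1) = (f {r, nth_elem (a p') j} = 1)"
          using r j unfolding G_def by simp
      qed
      show "\<forall>r\<in>R. \<forall>j<n. r \<noteq> nth_elem (a q) j \<and> r \<noteq> nth_elem (a q') j \<and> r \<noteq> nth_elem (a p) j \<and> r \<noteq> nth_elem (a p') j"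
      proof (intro ballI allI impI)
        fix r j assume r: "r \<in> R" and j: "j < n"
        have notin: "r \<noteq> nth_elem (a x) j" if "x \<in> P" for x
        proof -
          have "nth_elem (a x) j \<in> a x" by (rule nthin[OF that j])
          moreover have "R \<inter> a x = {}" using ap[OF that] by simp
          ultimately show ?thesis using r by auto
        qed
        show "r \<noteq> nth_elem (a q) j \<and> r \<noteq> nth_elem (a q') j \<and> r \<noteq> nth_elem (a p) j \<and> r \<noteq> nth_elem (a p') j"
          using notin[OF PP(1)] notin[OF PP(2)] notin[OF PP(3)] notin[OF PP(4)] by simp
      qed
      show "\<forall>i<n. \<forall>j<n. nth_elem (a p) i \<noteq> nth_elem (a q) j \<and> nth_elem (a p') i \<noteq> nth_elem (a q') j"
      proof (intro allI impI)
        fix i j assume i: "i < n" and j: "j < n"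
        have dd: "nth_elem (a x) i \<noteq> nth_elem (a z) j" if "x \<in> P" "z \<in> P" "x \<noteq> z" for x z
        proof -
          have "nth_elem (a x) i \<in> a x" by (rule nthin[OF that(1) i])
          moreover have "nth_elem (a z) j \<in> a z" by (rule nthin[OF that(2) j])
          moreover have "a x \<inter> a z = {}" by (rule adisj[OF that])
          ultimately show ?thesis by auto
        qed
        show "nth_elem (a p) i \<noteq> nth_elem (a q) j \<and> nth_elem (a p') i \<noteq> nth_elem (a q') j"
          using dd[OF PP(1) PP(2) pq] dd[OF PP(3) PP(4) pq'] by simp
      qed
      show "f {nth_elem (a p) k, nth_elem (a q) k} = 1" using ab(7) p q by simp
      show "f {nth_elem (a p') k, nth_elem (a q') k} = 0" using ab(8) p' q' by simp
      show "\<forall>i<n. \<forall>j<n. (i, j) \<noteq> (k, k) \<longrightarrow> f {nth_elem (a p) i, nth_elem (a q) j} = f {nth_elem (a p') i, nth_elem (a q') j}"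
        using ab(9) p q p' q' by simp
    qed
  qed
  have vk: "v (Inr k) = y p0 p0" unfolding v_def pos_def posf_def using k by simp
  have th2: "\<theta>^2 \<le> norm (v (Inr k) * v (Inr k))"
  proof -
    have "\<theta> \<le> norm (y p0 p0)" using y p0 P4P PZ by auto
    then have "\<theta> * \<theta> \<le> norm (y p0 p0) * norm (y p0 p0)" using th by (intro mult_mono) auto
    then show ?thesis using vk by (simp add: power2_eq_square norm_mult)
  qed
  have "norm (v (Inr k) * v (Inr k)) = norm ((T0 p q - T p q) + T p q - T p' q' + (T p' q' - T0 p' q'))"
    using E3 by (simp add: algebra_simps)
  also have "\<dots> \<le> norm (T0 p q - T p q) + norm (T p q) + norm (T p' q') + norm (T p' q' - T0 p' q')"
  proof -
    have t1: "norm ((T0 p q - T p q) + T p q - T p' q' + (T p' q' - T0 p' q')) \<le> norm ((T0 p q - T p q) + T p q - T p' q') + norm (T p' q' - T0 p' q')"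
      by (rule norm_triangle_ineq)
    have t2: "norm ((T0 p q - T p q) + T p q - T p' q') \<le> norm ((T0 p q - T p q) + T p q) + norm (T p' q')"
      by (rule norm_triangle_ineq4)
    have t3: "norm ((T0 p q - T p q) + T p q) \<le> norm (T0 p q - T p q) + norm (T p q)"
      by (rule norm_triangle_ineq)
    show ?thesis using t1 t2 t3 by linarith
  qed
  also have "\<dots> \<le> cJ * (cJ * (2 * e)) + 2 * \<delta> + 2 * \<delta> + cJ * (cJ * (2 * e))"
    using E1[of p q] E1[of p' q'] E2[OF p(1) q(1)] E2[OF p'(1) q'(1)] p q p' q' P4P
    by (intro add_mono) (auto simp: norm_minus_commute)
  finally have fin: "\<theta>^2 \<le> 2 * (cJ * (cJ * (2 * e))) + 4 * \<delta>" using th2 by simp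
  have "cJ * (cJ * (2 * e)) \<le> \<theta>^2 / 8"
  proof -
    have c0: "0 \<le> cJ * cJ" by simp
    have eq: "cJ * (cJ * (2 * e)) = \<theta>^2 / 8 * (cJ * cJ / (cJ * cJ + 1))"
      unfolding e_def using arith_help[OF c0, of "\<theta>^2"] by (simp add: mult.assoc)
    have le1: "cJ * cJ / (cJ * cJ + 1) \<le> 1"
    proof -
      have "0 < cJ * cJ + 1" using c0 by linarith
      then show ?thesis by (simp add: divide_le_eq_1)
    qed
    have "\<theta>^2 / 8 * (cJ * cJ / (cJ * cJ + 1)) \<le> \<theta>^2 / 8 * 1"
      by (rule mult_left_mono[OF le1]) simp
    then show ?thesis using eq by simp
  qed
  with fin have "\<theta>^2 \<le> \<theta>^2 * 3 / 4" unfolding \<delta>_def by linarith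
  moreover have "\<theta>^2 > 0" using th by simp
  ultimately show False by simp
qed


theorem mainTheorem4:
  fixes f :: "'a::wellorder set \<Rightarrow> nat" and Y :: "('a \<Rightarrow> complex) set"
  assumes "\<forall>\<alpha> \<beta>. \<alpha> \<noteq> \<beta> \<longrightarrow> f {\<alpha>, \<beta>} \<in> {0, 1}"
    and "partition_first_kind f"
    and "linear_subspace_ell1 Y"
    and "\<forall>x\<in>Y. P_f f x = 0"
  shows "separable_ell1 Y"
proof (rule ccontr)
  assume ns: "\<not> separable_ell1 Y"
  have Yl: "Y \<subseteq> ell1" using assms(3) unfolding linear_subspace_ell1_def by blast
  have Yadd: "(\<lambda>g. y g + z g) \<in> Y" if "y \<in> Y" "z \<in> Y" for y z
    using assms(3) that unfolding linear_subspace_ell1_def by blast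
  have Ysc: "(\<lambda>g. c * y g) \<in> Y" if "y \<in> Y" for y c
    using assms(3) that unfolding linear_subspace_ell1_def by blast
  have B0: "Bf f y z = 0" if y: "y \<in> Y" and z: "z \<in> Y" for y z
  proof -
    have "P_f f (\<lambda>g. y g + z g) = P_f f y + P_f f z + Bf f y z"
      by (rule P_add) (use y z Yl in auto)
    moreover have "P_f f (\<lambda>g. y g + z g) = 0" "P_f f y = 0" "P_f f z = 0"
      using assms(4) Yadd[OF y z] y z by auto
    ultimately show ?thesis by simp
  qed
  define Zs where "Zs \<theta> = {p. \<exists>y. y \<in> Y \<and> ell1_norm y \<le> 1 \<and> \<theta> \<le> norm (y p)}" for \<theta>
  have "\<exists>\<theta>>0. uncountable (Zs \<theta>)"
  proof (rule ccontr)
    assume "\<not> (\<exists>\<theta>>0. uncountable (Zs \<theta>))"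
    then have cnt: "countable (Zs \<theta>)" if "\<theta> > 0" for \<theta> using that by auto
    define C where "C = (\<Union>m. Zs (1 / real (Suc m)))"
    have cC: "countable C" unfolding C_def by (intro countable_UN) (auto intro: cnt)
    have supp: "\<forall>y\<in>Y. \<forall>g. g \<notin> C \<longrightarrow> y g = 0"
    proof (intro ballI allI impI)
      fix y g assume y: "y \<in> Y" and g: "g \<notin> C"
      show "y g = 0"
      proof (rule ccontr)
        assume ne: "y g \<noteq> 0"
        have yl: "y \<in> ell1" using y Yl by auto
        have "norm (y g) > 0" using ne by simp
        then have Npos: "ell1_norm y > 0" using ell1_point[OF yl, of g] by linarith
        define c where "c = complex_of_real (1 / ell1_norm y)"
        define y' where "y' = (\<lambda>h. c * y h)"
        have y'Y: "y' \<in> Y" unfolding y'_def by (rule Ysc[OF y])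
        have "ell1_norm y' = norm c * ell1_norm y" unfolding y'_def by (rule ell1_scale_norm[OF yl])
        also have "\<dots> = 1" unfolding c_def using Npos by (simp add: norm_divide)
        finally have N1: "ell1_norm y' \<le> 1" by simp
        have "norm (y' g) > 0" unfolding y'_def c_def using ne Npos by (simp add: norm_mult)
        then obtain m0 where m0: "m0 > 0" "inverse (real m0) < norm (y' g)"
          using ex_inverse_of_nat_less by blast
        have "1 / real (Suc (m0 - 1)) \<le> norm (y' g)" using m0 by (simp add: inverse_eq_divide)
        then have "g \<in> Zs (1 / real (Suc (m0 - 1)))" unfolding Zs_def using y'Y N1 by blast
        then have "g \<in> C" unfolding C_def by blast
        then show False using g by simp
      qed
    qed
    have "separable_ell1 Y" by (rule sep[OF Yl cC supp])
    then show False using ns by simp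
  qed
  then obtain \<theta> where th: "\<theta> > 0" and Zu: "uncountable (Zs \<theta>)" by blast
  have Zy: "\<forall>p\<in>Zs \<theta>. \<exists>y. y \<in> Y \<and> ell1_norm y \<le> 1 \<and> \<theta> \<le> norm (y p)" unfolding Zs_def by simp
  show False by (rule main_contra[OF assms(1) assms(2) Yl B0 th Zu Zy])
qed


end
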